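(* Let $A,F_1,\dots,F_k,B$ be a sequence of faces of $\mathcal{C}$, all of the same dimension, such that each face in the sequence opposes the next one. Then the two-sided ideal $Re_AR$ of $R$ generated by $e_A$ contains $e_B$.
   Context: Let $\mathcal{H}$ be a finite arrangement of linear hyperplanes in $\mathbb{R}^n$, each $H$ cut out by a fixed real linear form $f_H$, with sign vectors $\sigma(x)\in\{+,-,0\}^{\mathcal{H}}$. Faces are classes of points with equal sign vector; $\mathcal{C}$ is the set of faces, ordered by $C'\le C$ iff $C'\subseteq\overline{C}$. Two faces $A,B$ of equal dimension $d\ge1$ oppose each other if they have the same linear span and there is a face $C$ of dimension $d-1$, $C\le A$, $C\le B$, with $\sigma(A)_H=-\sigma(B)_H$ for every $H$ with $\sigma(C)_H=0$. $A,B,C$ are collinear if a line segment meets $A,B,C$ in that order. $R$ is the $\mathbb{C}$-algebra generated by $e_C$ ($C\in\mathcal{C}$) with relations $e_C^2=e_C$; $e_Ae_C=e_Ae_Be_C$ for collinear $A,B,C$; $e_Ae_B=e_B=e_Be_A$ for $A\le B$; localised by inverting all $e_Ae_Be_A+(1-e_A)$ with $A,B$ opposing. *)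

theory Defs
  imports "HOL-Analysis.Analysis"
begin

definition hyperplane_arrangement :: "'h set \<Rightarrow> ('h \<Rightarrow> 'v::euclidean_space \<Rightarrow> real) \<Rightarrow> bool" where
  "hyperplane_arrangement HS f \<longleftrightarrow> finite HS \<and> (\<forall>h\<in>HS. linear (f h) \<and> f h \<noteq> (\<lambda>_. 0))"

definition sgnvec :: "'h set \<Rightarrow> ('h \<Rightarrow> 'v::euclidean_space \<Rightarrow> real) \<Rightarrow> 'v \<Rightarrow> 'h \<Rightarrow> real" where
  "sgnvec HS f x = (\<lambda>h. if h \<in> HS then sgn (f h x) else 0)"

definition face_of_pt :: "'h set \<Rightarrow> ('h \<Rightarrow> 'v::euclidean_space \<Rightarrow> real) \<Rightarrow> 'v \<Rightarrow> 'v set" where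
  "face_of_pt HS f x = {y. sgnvec HS f y = sgnvec HS f x}"

definition arr_faces :: "'h set \<Rightarrow> ('h \<Rightarrow> 'v::euclidean_space \<Rightarrow> real) \<Rightarrow> 'v set set" where
  "arr_faces HS f = range (face_of_pt HS f)"

definition face_sgn :: "'h set \<Rightarrow> ('h \<Rightarrow> 'v::euclidean_space \<Rightarrow> real) \<Rightarrow> 'v set \<Rightarrow> 'h \<Rightarrow> real" where
  "face_sgn HS f C = sgnvec HS f (SOME x. x \<in> C)"

definition face_le :: "'v::euclidean_space set \<Rightarrow> 'v set \<Rightarrow> bool" where
  "face_le C' C \<longleftrightarrow> C' \<subseteq> closure C"

definition opposing :: "'h set \<Rightarrow> ('h \<Rightarrow> 'v::euclidean_space \<Rightarrow> real) \<Rightarrow> 'v set \<Rightarrow> 'v set \<Rightarrow> bool" where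
  "opposing HS f A B \<longleftrightarrow>
     A \<in> arr_faces HS f \<and> B \<in> arr_faces HS f \<and> dim A = dim B \<and> 1 \<le> dim A \<and> span A = span B \<and>
     (\<exists>C\<in>arr_faces HS f. dim C = dim A - 1 \<and> face_le C A \<and> face_le C B \<and>
        (\<forall>h\<in>HS. face_sgn HS f C h = 0 \<longrightarrow> face_sgn HS f A h = - face_sgn HS f B h))"

definition collinear_faces :: "'v::euclidean_space set \<Rightarrow> 'v set \<Rightarrow> 'v set \<Rightarrow> bool" where
  "collinear_faces A B C \<longleftrightarrow>
     (\<exists>a\<in>A. \<exists>b\<in>B. \<exists>c\<in>C. b \<in> closed_segment a c)"

definition invertible_elem :: "'a::ring_1 \<Rightarrow> bool" where
  "invertible_elem x \<longleftrightarrow> (\<exists>y. x * y = 1 \<and> y * x = 1)"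

definition two_sided_ideal :: "'a::ring_1 \<Rightarrow> 'a set" where
  "two_sided_ideal x = {z. \<exists>(m::nat) r s. z = (\<Sum>i<m. r i * x * s i)}"

definition complex_algebra_str :: "(complex \<Rightarrow> 'a::ring_1) \<Rightarrow> bool" where
  "complex_algebra_str emb \<longleftrightarrow> emb 1 = 1 \<and> (\<forall>x y. emb (x + y) = emb x + emb y) \<and>
     (\<forall>x y. emb (x * y) = emb x * emb y) \<and> (\<forall>z a. emb z * a = a * emb z)"

text \<open>e : faces \<rightarrow> S is a representation of R in the complex algebra S, i.e. satisfies the
  defining relations of R and sends the elements inverted in R to units.  By the universal
  property of R (generators + relations, then universal localisation) such representations
  are exactly the algebra homomorphisms R \<rightarrow> S, composed with C \<mapsto> e_C.\<close>
definition R_rep :: "'h set \<Rightarrow> ('h \<Rightarrow> 'v::euclidean_space \<Rightarrow> real) \<Rightarrow> (complex \<Rightarrow> 'a::ring_1) \<Rightarrow> ('v set \<Rightarrow> 'a) \<Rightarrow> bool" where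
  "R_rep HS f emb e \<longleftrightarrow> complex_algebra_str emb \<and>
     (\<forall>C\<in>arr_faces HS f. e C * e C = e C) \<and>
     (\<forall>A\<in>arr_faces HS f. \<forall>B\<in>arr_faces HS f. \<forall>C\<in>arr_faces HS f.
        collinear_faces A B C \<longrightarrow> e A * e C = e A * e B * e C) \<and>
     (\<forall>A\<in>arr_faces HS f. \<forall>B\<in>arr_faces HS f.
        face_le A B \<longrightarrow> e A * e B = e B \<and> e B * e A = e B) \<and>
     (\<forall>A B. opposing HS f A B \<longrightarrow> invertible_elem (e A * e B * e A + (1 - e A)))"

end

theory Submission
  imports Defs
begin

lemma tsi_base: "(x::'a::ring_1) \<in> two_sided_ideal x"
  unfolding two_sided_ideal_def
  by (rule CollectI, rule exI[of _ 1], rule exI[of _ "\<lambda>_. 1"], rule exI[of _ "\<lambda>_. 1"]) simp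

lemma tsi_mult: "(r::'a::ring_1) * x * s \<in> two_sided_ideal x"
  unfolding two_sided_ideal_def
  by (rule CollectI, rule exI[of _ 1], rule exI[of _ "\<lambda>_. r"], rule exI[of _ "\<lambda>_. s"]) simp

lemma tsi_add_term:
  assumes "(z::'a::ring_1) \<in> two_sided_ideal x"
  shows "z + r * x * s \<in> two_sided_ideal x"
proof -
  from assms obtain m p q where z: "z = (\<Sum>i<(m::nat). p i * x * q i)"
    unfolding two_sided_ideal_def mem_Collect_eq by blast
  have "z + r * x * s = (\<Sum>i<Suc m. (p(m:=r)) i * x * (q(m:=s)) i)"
    unfolding z by (simp add: sum.lessThan_Suc)
  then show ?thesis unfolding two_sided_ideal_def mem_Collect_eq by blast
qed

lemma tsi_add:
  assumes "(z::'a::ring_1) \<in> two_sided_ideal x"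
  shows "z + (\<Sum>i<(n::nat). r i * x * s i) \<in> two_sided_ideal x"
proof (induction n)
  case 0
  then show ?case using assms by simp
next
  case (Suc n)
  then show ?case using tsi_add_term[OF Suc] by (simp add: add.assoc)
qed

lemma tsi_addI:
  assumes "(z::'a::ring_1) \<in> two_sided_ideal x" "w \<in> two_sided_ideal x"
  shows "z + w \<in> two_sided_ideal x"
  using assms(2) tsi_add[OF assms(1)] unfolding two_sided_ideal_def mem_Collect_eq by blast

lemma tsi_zero: "(0::'a::ring_1) \<in> two_sided_ideal x"
  unfolding two_sided_ideal_def
  by (rule CollectI, rule exI[of _ 0]) simp

lemma tsi_mult_ideal:
  assumes "(y::'a::ring_1) \<in> two_sided_ideal x"
  shows "r * y * s \<in> two_sided_ideal x"
proof -
  from assms obtain m p q where y: "y = (\<Sum>i<(m::nat). p i * x * q i)"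
    unfolding two_sided_ideal_def mem_Collect_eq by blast
  have "r * y * s = (\<Sum>i<m. (r * p i) * x * (q i * s))"
    unfolding y by (simp add: sum_distrib_left sum_distrib_right mult.assoc)
  then show ?thesis unfolding two_sided_ideal_def mem_Collect_eq by (intro exI[of _ m] exI[of _ "\<lambda>i. r * p i"] exI[of _ "\<lambda>i. q i * s"]) simp
qed

lemma tsi_trans:
  assumes "(z::'a::ring_1) \<in> two_sided_ideal y" "y \<in> two_sided_ideal x"
  shows "z \<in> two_sided_ideal x"
proof -
  from assms(1) obtain m p q where z: "z = (\<Sum>i<(m::nat). p i * y * q i)"
    unfolding two_sided_ideal_def mem_Collect_eq by blast
  have "(\<Sum>i<m. p i * y * q i) \<in> two_sided_ideal x" for m
  proof (induction m)
    case 0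
    then show ?case by (simp add: tsi_zero)
  next
    case (Suc m)
    then show ?case by (simp add: tsi_addI tsi_mult_ideal assms(2))
  qed
  then show ?thesis using z by simp
qed

lemma opposing_sym: "opposing HS f A B \<Longrightarrow> opposing HS f B A"
  unfolding opposing_def by (metis minus_equation_iff)

lemma opp_step:
  assumes rep: "R_rep HS f emb e" and opp: "opposing HS f A B"
  shows "e B \<in> two_sided_ideal (e A)"
proof -
  have opp': "opposing HS f B A" using opposing_sym[OF opp] .
  have Bf: "B \<in> arr_faces HS f" using opp unfolding opposing_def by blast
  have idem: "e B * e B = e B" using rep Bf unfolding R_rep_def by blast
  have "invertible_elem (e B * e A * e B + (1 - e B))"
    using rep opp' unfolding R_rep_def by blast
  then obtain w where w: "(e B * e A * e B + (1 - e B)) * w = 1"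
    unfolding invertible_elem_def by blast
  have eq: "e B * (e B * e A * e B + (1 - e B)) = e B * e A * e B"
    by (simp add: algebra_simps idem flip: mult.assoc)
  have "e B = e B * ((e B * e A * e B + (1 - e B)) * w)" using w by simp
  also have "\<dots> = e B * e A * (e B * w)"
    by (simp only: mult.assoc[symmetric] eq)
  finally show ?thesis using tsi_mult by metis
qed

theorem lemma4p1:
  fixes HS :: "'h set" and f :: "'h \<Rightarrow> 'v::euclidean_space \<Rightarrow> real"
    and emb :: "complex \<Rightarrow> 'a::ring_1" and e :: "'v set \<Rightarrow> 'a"
    and A B :: "'v set" and Fs :: "'v set list"
  assumes "hyperplane_arrangement HS f"
    and "R_rep HS f emb e"
    and "A \<in> arr_faces HS f" and "B \<in> arr_faces HS f" and "set Fs \<subseteq> arr_faces HS f"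
    and "\<forall>X\<in>set (A # Fs @ [B]). dim X = dim A"
    and "\<forall>i < length Fs + 1. opposing HS f ((A # Fs @ [B]) ! i) ((A # Fs @ [B]) ! Suc i)"
  shows "e B \<in> two_sided_ideal (e A)"
proof -
  define L where "L = A # Fs @ [B]"
  have "i \<le> length Fs + 1 \<Longrightarrow> e (L ! i) \<in> two_sided_ideal (e A)" for i
  proof (induction i)
    case 0
    then show ?case by (simp add: L_def tsi_base)
  next
    case (Suc i)
    have "opposing HS f (L ! i) (L ! Suc i)" using assms(7) Suc.prems L_def by simp
    then have "e (L ! Suc i) \<in> two_sided_ideal (e (L ! i))" using opp_step assms(2) by blast
    then show ?case using Suc tsi_trans by simp
  qed
  from this[of "length Fs + 1"] show ?thesis by (simp add: L_def nth_append)
qed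

end
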